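(* Let $A$ be a $p$-adically separated $\delta$-ring. If $pA$ is a prime ideal of $A$, then $A$ is $p$-torsion-free.
   Context: All rings are commutative $\mathbb{Z}_{(p)}$-algebras. A $\delta$-ring is a ring $A$ with $\delta:A\to A$ satisfying $\delta(0)=\delta(1)=0$, $\delta(a+b)=\delta(a)+\delta(b)+\frac{a^p+b^p-(a+b)^p}{p}$, $\delta(ab)=a^p\delta(b)+b^p\delta(a)+p\delta(a)\delta(b)$. *)

theory Defs
  imports "HOL-Computational_Algebra.Primes"
begin

text \<open>Rings are commutative rings (type class comm_ring_1). A ring is a
  Z_(p)-algebra iff every integer prime to p is invertible in it.\<close>

definition zp_algebra :: "nat \<Rightarrow> 'a::comm_ring_1 itself \<Rightarrow> bool" where
  "zp_algebra p _ \<longleftrightarrow> (\<forall>m::int. coprime m (int p) \<longrightarrow> (of_int m :: 'a) dvd 1)"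

text \<open>The integer polynomial (a^p + b^p - (a+b)^p)/p, written with the
  integer coefficients (p choose i)/p.\<close>

definition carry_poly :: "nat \<Rightarrow> 'a::comm_ring_1 \<Rightarrow> 'a \<Rightarrow> 'a" where
  "carry_poly p a b =
     - (\<Sum>i\<in>{1..<p}. of_nat ((p choose i) div p) * a ^ i * b ^ (p - i))"

definition is_delta_ring :: "nat \<Rightarrow> ('a::comm_ring_1 \<Rightarrow> 'a) \<Rightarrow> bool" where
  "is_delta_ring p \<delta> \<longleftrightarrow>
     \<delta> 0 = 0 \<and> \<delta> 1 = 0 \<and>
     (\<forall>a b. \<delta> (a + b) = \<delta> a + \<delta> b + carry_poly p a b) \<and>
     (\<forall>a b. \<delta> (a * b) = a ^ p * \<delta> b + b ^ p * \<delta> a + of_nat p * \<delta> a * \<delta> b)"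

definition is_ideal :: "'a::comm_ring_1 set \<Rightarrow> bool" where
  "is_ideal I \<longleftrightarrow> 0 \<in> I \<and> (\<forall>x\<in>I. \<forall>y\<in>I. x + y \<in> I) \<and> (\<forall>r. \<forall>x\<in>I. r * x \<in> I)"

definition is_prime_ideal :: "'a::comm_ring_1 set \<Rightarrow> bool" where
  "is_prime_ideal I \<longleftrightarrow> is_ideal I \<and> I \<noteq> UNIV \<and>
     (\<forall>a b. a * b \<in> I \<longrightarrow> a \<in> I \<or> b \<in> I)"

definition principal_ideal :: "'a::comm_ring_1 \<Rightarrow> 'a set" where
  "principal_ideal x = {x * y | y. True}"

definition p_adically_separated :: "nat \<Rightarrow> 'a::comm_ring_1 itself \<Rightarrow> bool" where
  "p_adically_separated p _ \<longleftrightarrow>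
     (\<Inter>n. principal_ideal ((of_nat p :: 'a) ^ n)) = {0}"

definition p_torsion_free :: "nat \<Rightarrow> 'a::comm_ring_1 itself \<Rightarrow> bool" where
  "p_torsion_free p _ \<longleftrightarrow> (\<forall>a::'a. of_nat p * a = 0 \<longrightarrow> a = 0)"

end

theory Submission
  imports Defs
begin

lemma mem_pi: "x \<in> principal_ideal a \<longleftrightarrow> a dvd x"
  by (auto simp: principal_ideal_def dvd_def)

lemma carry_int:
  assumes "prime p"
  shows "int p * carry_poly p (a::int) b = a ^ p + b ^ p - (a + b) ^ p"
proof -
  have p1: "p \<ge> 1" using assms prime_gt_0_nat by (simp add: Suc_leI)
  have dv: "int ((p choose i) div p) * int p = int (p choose i)" if "i \<in> {1..<p}" for i
  proof -
    have "p dvd (p choose i)" using that assms dvd_choose_prime by auto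
    then show ?thesis by (metis dvd_div_mult_self of_nat_mult)
  qed
  have "int p * carry_poly p a b = - (\<Sum>i\<in>{1..<p}. int (p choose i) * a ^ i * b ^ (p - i))"
  proof -
    have "int p * (\<Sum>i\<in>{1..<p}. int ((p choose i) div p) * a ^ i * b ^ (p - i))
        = (\<Sum>i\<in>{1..<p}. int p * (int ((p choose i) div p) * a ^ i * b ^ (p - i)))"
      by (rule sum_distrib_left)
    also have "\<dots> = (\<Sum>i\<in>{1..<p}. int (p choose i) * a ^ i * b ^ (p - i))"
    proof (rule sum.cong[OF refl])
      fix i assume i: "i \<in> {1..<p}"
      have "int p * (int ((p choose i) div p) * a ^ i * b ^ (p - i))
          = (int ((p choose i) div p) * int p) * a ^ i * b ^ (p - i)"
        by (simp only: mult.assoc mult.commute mult.left_commute)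
      then show "int p * (int ((p choose i) div p) * a ^ i * b ^ (p - i))
          = int (p choose i) * a ^ i * b ^ (p - i)" by (simp only: dv[OF i])
    qed
    finally show ?thesis unfolding carry_poly_def by simp
  qed
  moreover have "(a + b) ^ p = (\<Sum>i\<le>p. int (p choose i) * a ^ i * b ^ (p - i))"
    by (simp add: binomial_ring)
  moreover have "(\<Sum>i\<le>p. int (p choose i) * a ^ i * b ^ (p - i)) =
     b ^ p + (a ^ p + (\<Sum>i\<in>{1..<p}. int (p choose i) * a ^ i * b ^ (p - i)))"
  proof -
    have e: "{..p} = insert 0 (insert p {1..<p})" using p1 by auto
    show ?thesis unfolding e using p1 by (subst sum.insert; simp)+
  qed
  ultimately show ?thesis by simp
qed

lemma carry_hom: "carry_poly p (of_int a) (of_int b) = (of_int (carry_poly p a b) :: 'a::comm_ring_1)"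
  unfolding carry_poly_def by simp

definition Dn :: "nat \<Rightarrow> nat \<Rightarrow> int" where
  "Dn p n = (\<Sum>m<n. carry_poly p (int m) 1)"

lemma Dn_mult:
  assumes "prime p"
  shows "int p * Dn p n = int n - int n ^ p"
proof (induction n)
  case 0
  then show ?case using assms prime_gt_0_nat by (simp add: Dn_def)
next
  case (Suc n)
  have "int p * Dn p (Suc n) = int p * Dn p n + int p * carry_poly p (int n) 1"
    by (simp add: Dn_def algebra_simps)
  also have "\<dots> = int (Suc n) - int (Suc n) ^ p"
    using Suc carry_int[OF assms, of "int n" 1] by (simp add: algebra_simps)
  finally show ?case .
qed

lemma delta_nat:
  assumes "is_delta_ring p \<delta>"
  shows "\<delta> (of_nat n :: 'a::comm_ring_1) = of_int (Dn p n)"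
proof (induction n)
  case 0
  then show ?case using assms by (simp add: Dn_def is_delta_ring_def)
next
  case (Suc n)
  have "\<delta> (of_nat (Suc n) :: 'a) = \<delta> (of_int (int n) + of_int 1)" by (simp add: add.commute)
  also have "\<dots> = \<delta> (of_nat n) + \<delta> 1 + carry_poly p (of_int (int n)) (of_int 1 :: 'a)"
    using assms unfolding is_delta_ring_def by (metis of_int_of_nat_eq of_int_1)
  also have "\<dots> = of_int (Dn p (Suc n))"
    using Suc assms unfolding carry_hom by (simp add: is_delta_ring_def Dn_def)
  finally show ?case .
qed

lemma Dn_p:
  assumes "prime p"
  shows "Dn p p = 1 - int p ^ (p - 1)"
proof -
  have p1: "p \<ge> 1" using assms prime_gt_0_nat by (simp add: Suc_leI)
  have "int p * Dn p p = int p * (1 - int p ^ (p - 1))"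
    using Dn_mult[OF assms, of p] p1
    by (simp add: algebra_simps power_eq_if)
  then show ?thesis using p1 by simp
qed

theorem lemma3p2:
  fixes p :: nat and \<delta> :: "'a::comm_ring_1 \<Rightarrow> 'a"
  assumes "prime p"
    and "zp_algebra p TYPE('a)"
    and "is_delta_ring p \<delta>"
    and "p_adically_separated p TYPE('a)"
    and "is_prime_ideal (principal_ideal (of_nat p :: 'a))"
  shows "p_torsion_free p TYPE('a)"
proof -
  define P where "P = (of_nat p :: 'a)"
  have p1: "p \<ge> 1" using assms(1) prime_gt_0_nat by (simp add: Suc_leI)
  have p2: "p \<ge> 2" using assms(1) prime_ge_2_nat by blast
  have dP: "\<delta> P = of_int (1 - int p ^ (p - 1))"
    unfolding P_def using delta_nat[OF assms(3)] Dn_p[OF assms(1)] by simp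
  have cop: "coprime (1 - int p ^ (p - 1)) (int p)"
  proof -
    have "int p dvd int p ^ (p - 1)" using p2 by (simp add: dvd_power)
    then obtain q where "int p ^ (p - 1) = int p * q" by blast
    then show ?thesis
    proof (intro coprimeI)
      fix c assume c1: "c dvd 1 - int p ^ (p - 1)" and c2: "c dvd int p"
      have "c dvd int p * q" using c2 by simp
      then have "c dvd (1 - int p ^ (p - 1)) + int p * q" using c1 by simp
      then show "is_unit c" using \<open>int p ^ (p - 1) = int p * q\<close> by simp
    qed
  qed
  have unit: "\<delta> P dvd 1"
    using assms(2) cop unfolding zp_algebra_def dP by blast
  have Ppow: "P ^ p = P * P ^ (p - 1)" using p1 by (simp add: power_eq_if)
  have dPx: "\<delta> (P * x) = x ^ p * \<delta> P + P * \<delta> x" for x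
  proof -
    have h1: "\<delta> (P * x) = P ^ p * \<delta> x + x ^ p * \<delta> P + P * \<delta> P * \<delta> x"
      using assms(3) unfolding is_delta_ring_def P_def by simp
    have h2: "P ^ p * \<delta> x + P * \<delta> P * \<delta> x = P * \<delta> x"
      unfolding Ppow dP by (simp add: algebra_simps of_int_diff P_def)
    show ?thesis using h1 h2 by (simp add: algebra_simps)
  qed
  have pr: "\<And>a b. P dvd a * b \<Longrightarrow> P dvd a \<or> P dvd b"
    using assms(5) unfolding is_prime_ideal_def mem_pi P_def by blast
  have prpow: "P dvd x ^ n \<Longrightarrow> n \<ge> 1 \<Longrightarrow> P dvd x" for x n
  proof (induction n)
    case 0 then show ?case by simp
  next
    case (Suc n)
    show ?case
    proof (cases "n = 0")
      case True
      then show ?thesis using Suc.prems by simp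
    next
      case False
      have "P dvd x * x ^ n" using Suc.prems(1) by simp
      then have "P dvd x \<or> P dvd x ^ n" by (rule pr)
      then show ?thesis using Suc.IH False by linarith
    qed
  qed
  have key: "\<exists>s. \<delta> (P ^ k * x) = P ^ (k - 1) * x ^ p * \<delta> P + P ^ k * s" if "k \<ge> 1" for k x
    using that
  proof (induction k rule: dec_induct)
    case base
    then show ?case using dPx[of x] by (auto simp: algebra_simps)
  next
    case (step k)
    then obtain s where s: "\<delta> (P ^ k * x) = P ^ (k - 1) * x ^ p * \<delta> P + P ^ k * s" by blast
    have e: "k * p = k + 1 + (k * p - k - 1)"
    proof -
      have "k * p \<ge> k * 2" using p2 by simp
      then have "k * p \<ge> k + 1" using step(1) by linarith
      then show ?thesis by linarith
    qed
    have "\<delta> (P ^ Suc k * x) = \<delta> (P * (P ^ k * x))" by (simp add: algebra_simps)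
    also have "\<dots> = (P ^ k * x) ^ p * \<delta> P + P * \<delta> (P ^ k * x)" by (rule dPx)
    also have "\<dots> = P ^ (k * p) * x ^ p * \<delta> P + P ^ k * x ^ p * \<delta> P + P ^ Suc k * s"
    proof -
      have a: "(P ^ k * x) ^ p = P ^ (k * p) * x ^ p" by (simp add: power_mult_distrib power_mult)
      have b: "P * P ^ (k - 1) = P ^ k" using step(1) by (cases k) auto
      have c: "P * (P ^ (k - 1) * x ^ p * \<delta> P + P ^ k * s) = P ^ k * x ^ p * \<delta> P + P ^ Suc k * s"
        by (simp only: distrib_left mult.assoc[symmetric] b power_Suc)
      show ?thesis unfolding s a c by (simp only: add.assoc)
    qed
    also have "\<dots> = P ^ k * x ^ p * \<delta> P + P ^ Suc k * (P ^ (k * p - k - 1) * x ^ p * \<delta> P + s)"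
      by (subst e) (simp add: power_add algebra_simps)
    finally show ?case by auto
  qed
  have tors: "P ^ k * x = 0 \<Longrightarrow> P dvd x" for k x
  proof (induction k arbitrary: x)
    case 0 then show ?case by simp
  next
    case (Suc k)
    obtain s where s: "\<delta> (P ^ Suc k * x) = P ^ k * x ^ p * \<delta> P + P ^ Suc k * s"
      using key[of "Suc k" x] by auto
    have d0: "\<delta> 0 = 0" using assms(3) unfolding is_delta_ring_def by blast
    have "P ^ k * x ^ p * \<delta> P + P ^ Suc k * s = 0"
      using s Suc.prems d0 by simp
    then have "P ^ k * (x ^ p * \<delta> P + P * s) = 0"
      by (simp add: algebra_simps)
    then have "P dvd x ^ p * \<delta> P + P * s" by (rule Suc.IH)
    then have "P dvd x ^ p * \<delta> P" using dvd_diff[OF _ dvd_triv_left[of P s]] by fastforce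
    moreover obtain u where u: "1 = \<delta> P * u" using unit by (auto simp: dvd_def)
    ultimately have "P dvd x ^ p * \<delta> P * u" by simp
    moreover have "x ^ p * \<delta> P * u = x ^ p" by (metis u mult.assoc mult_1_right)
    ultimately have "P dvd x ^ p" by simp
    then show ?case using prpow p1 by blast
  qed
  have all: "P ^ k * x = 0 \<Longrightarrow> P ^ n dvd x" for n k x
  proof (induction n arbitrary: k x)
    case 0 then show ?case by simp
  next
    case (Suc n)
    obtain y where y: "x = P * y" using tors[OF Suc.prems] by blast
    have "P ^ Suc k * y = 0" using Suc.prems y by (simp add: algebra_simps)
    then have "P ^ n dvd y" by (rule Suc.IH)
    then show ?case using y by (simp add: mult_dvd_mono)
  qed
  show ?thesis unfolding p_torsion_free_def
  proof (intro allI impI)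
    fix a :: 'a
    assume "of_nat p * a = 0"
    then have "P ^ 1 * a = 0" by (simp add: P_def)
    then have "\<And>n. P ^ n dvd a" using all[of 1 a] by blast
    then have am: "a \<in> (\<Inter>n. principal_ideal (P ^ n))" unfolding mem_pi INT_iff by blast
    have eq: "(\<Inter>n. principal_ideal (P ^ n)) = {0}"
      using assms(4) unfolding p_adically_separated_def P_def .
    have "a \<in> {0}" using am unfolding eq .
    then show "a = 0" by simp
  qed
qed

end
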